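(* Let $f_1,\dots,f_k\in\mathbb{K}[\mathbf{x}]$ be nonzero multihomogeneous polynomials, $<$ a monomial order, and $\mathbf{d}\in\mathbb{Z}^r$ such that $[H_1^k]_{\mathbf{d}}=0$. Then, in the matrix $\mathrm{M_3H}(\{f_1,\dots,f_k\},\mathbf{d},<)$, every row of the form $\mathbf{x}^\beta\cdot f_k$ is linearly independent of the other rows (it is not a linear combination of them).
   Context: $\mathbb{K}$ is a field of characteristic $0$; $\mathbb{K}[\mathbf{x}]$ is the polynomial ring in variables $x_{i,0},\dots,x_{i,n_i}$ ($1\le i\le r$), $\mathbb{Z}^r$-graded with $x_{i,j}$ of degree the $i$-th standard basis vector; $[\,\cdot\,]_{\mathbf{d}}$ denotes multidegree-$\mathbf{d}$ parts (zero if $\mathbf{d}$ has a negative coordinate). $H_1^k:=H_1(\mathcal{K}_\bullet(f_1,\dots,f_k;\mathbb{K}[\mathbf{x}]))$ is the first homology of the Koszul complex of $f_1,\dots,f_k$ over $\mathbb{K}[\mathbf{x}]$, with its multigrading. A Macaulay matrix has columns indexed by monomials and rows representing polynomials (entry = coefficient). The procedure $\mathrm{M_3H}(\{f_1,\dots,f_k\},\mathbf{d},<)$ returns a Macaulay matrix with columns the monomials of $\mathbb{K}[\mathbf{x}]_{\mathbf{d}}$ in decreasing order for $<$, defined recursively: if $k=1$, start from the empty matrix and $\mathfrak{L}=\emptyset$; if $k>1$, start from $\mathrm{M_3H}(\{f_1,\dots,f_{k-1}\},\mathbf{d},<)$ and let $\mathfrak{L}$ be the set of leading monomials of the nonzero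 rows of the Gaussian elimination of $\mathrm{M_3H}(\{f_1,\dots,f_{k-1}\},\mathbf{d}-\deg(f_k),<)$. Then append the row $\mathbf{x}^\beta f_k$ for every monomial $\mathbf{x}^\beta\in\mathbb{K}[\mathbf{x}]_{\mathbf{d}-\deg(f_k)}\setminus\mathfrak{L}$. *)

theory Defs
  imports "HOL-Library.Poly_Mapping"
begin

text \<open>Variables x_{i,j} are encoded as pairs (i,j) with i < r and j \<le> n i
  (0-based block index i).\<close>

type_synonym mon = "(nat \<times> nat) \<Rightarrow>\<^sub>0 nat"
type_synonym 'a mpoly = "mon \<Rightarrow>\<^sub>0 'a"

definition vars :: "nat \<Rightarrow> (nat \<Rightarrow> nat) \<Rightarrow> (nat \<times> nat) set" where
  "vars r n = {(i, j). i < r \<and> j \<le> n i}"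

definition mons :: "nat \<Rightarrow> (nat \<Rightarrow> nat) \<Rightarrow> mon set" where
  "mons r n = {m. Poly_Mapping.keys m \<subseteq> vars r n}"

definition polys :: "nat \<Rightarrow> (nat \<Rightarrow> nat) \<Rightarrow> ('a::zero) mpoly set" where
  "polys r n = {p. Poly_Mapping.keys p \<subseteq> mons r n}"

definition mdeg :: "nat \<Rightarrow> (nat \<Rightarrow> nat) \<Rightarrow> mon \<Rightarrow> int list" where
  "mdeg r n m = map (\<lambda>i. int (\<Sum>j\<le>n i. Poly_Mapping.lookup m (i, j))) [0..<r]"

text \<open>Monomials of K[x]_e (empty if e has a negative coordinate).\<close>
definition mons_deg :: "nat \<Rightarrow> (nat \<Rightarrow> nat) \<Rightarrow> int list \<Rightarrow> mon set" where
  "mons_deg r n e = {m \<in> mons r n. mdeg r n m = e}"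

definition hom_of :: "nat \<Rightarrow> (nat \<Rightarrow> nat) \<Rightarrow> int list \<Rightarrow> ('a::zero) mpoly \<Rightarrow> bool" where
  "hom_of r n e g \<longleftrightarrow> g \<in> polys r n \<and> (\<forall>m\<in>Poly_Mapping.keys g. mdeg r n m = e)"

definition multihomogeneous :: "nat \<Rightarrow> (nat \<Rightarrow> nat) \<Rightarrow> ('a::zero) mpoly \<Rightarrow> bool" where
  "multihomogeneous r n f \<longleftrightarrow> (\<exists>e. hom_of r n e f)"

definition pdeg :: "nat \<Rightarrow> (nat \<Rightarrow> nat) \<Rightarrow> ('a::zero) mpoly \<Rightarrow> int list" where
  "pdeg r n f = mdeg r n (SOME m. m \<in> Poly_Mapping.keys f)"

definition vsub :: "int list \<Rightarrow> int list \<Rightarrow> int list" where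
  "vsub d e = map2 (-) d e"

definition monomial_order :: "nat \<Rightarrow> (nat \<Rightarrow> nat) \<Rightarrow> (mon \<Rightarrow> mon \<Rightarrow> bool) \<Rightarrow> bool" where
  "monomial_order r n lt \<longleftrightarrow>
     (\<forall>a\<in>mons r n. \<not> lt a a) \<and>
     (\<forall>a\<in>mons r n. \<forall>b\<in>mons r n. \<forall>c\<in>mons r n. lt a b \<longrightarrow> lt b c \<longrightarrow> lt a c) \<and>
     (\<forall>a\<in>mons r n. \<forall>b\<in>mons r n. a = b \<or> lt a b \<or> lt b a) \<and>
     (\<forall>a\<in>mons r n. a \<noteq> 0 \<longrightarrow> lt 0 a) \<and>
     (\<forall>a\<in>mons r n. \<forall>b\<in>mons r n. \<forall>c\<in>mons r n. lt a b \<longrightarrow> lt (a + c) (b + c))"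

definition lm :: "(mon \<Rightarrow> mon \<Rightarrow> bool) \<Rightarrow> ('a::zero) mpoly \<Rightarrow> mon" where
  "lm lt p = (THE m. m \<in> Poly_Mapping.keys p \<and> (\<forall>m'\<in>Poly_Mapping.keys p. m' \<noteq> m \<longrightarrow> lt m' m))"

definition lin_comb :: "('i \<Rightarrow> ('a::field) mpoly) \<Rightarrow> 'i set \<Rightarrow> 'a mpoly \<Rightarrow> bool" where
  "lin_comb row I p \<longleftrightarrow>
     (\<exists>A c. finite A \<and> A \<subseteq> I \<and> p = (\<Sum>x\<in>A. Poly_Mapping.single 0 (c x) * row x))"

text \<open>The row x^beta * f_(i+1) (0-based index i into the list fs).\<close>
definition mrow :: "('a::field) mpoly list \<Rightarrow> nat \<times> mon \<Rightarrow> 'a mpoly" where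
  "mrow fs x = Poly_Mapping.single (snd x) 1 * fs ! fst x"

text \<open>Rows of M3H({f_1..f_k}, d, <), indexed by pairs (i, beta) meaning the row
  x^beta * f_(i+1). The set of leading monomials of the nonzero rows of the
  Gaussian elimination of a matrix equals the set of leading monomials of the
  nonzero elements of its row space.\<close>
fun M3H :: "nat \<Rightarrow> (nat \<Rightarrow> nat) \<Rightarrow> (mon \<Rightarrow> mon \<Rightarrow> bool) \<Rightarrow> ('a::field) mpoly list
             \<Rightarrow> nat \<Rightarrow> int list \<Rightarrow> (nat \<times> mon) set" where
  "M3H r n lt fs 0 d = {}"
| "M3H r n lt fs (Suc k) d =
     (let e = vsub d (pdeg r n (fs ! k));
          L = {lm lt p | p. p \<noteq> 0 \<and> lin_comb (mrow fs) (M3H r n lt fs k e) p}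
      in M3H r n lt fs k d \<union> {(k, \<beta>) | \<beta>. \<beta> \<in> mons_deg r n e \<and> \<beta> \<notin> L})"

text \<open>[H_1(K(f_1..f_k))]_d = 0: every multidegree-d Koszul 1-cycle
  (component l in degree d - deg f_l) is a Koszul boundary.\<close>
definition H1_vanishes :: "nat \<Rightarrow> (nat \<Rightarrow> nat) \<Rightarrow> ('a::field) mpoly list \<Rightarrow> int list \<Rightarrow> bool" where
  "H1_vanishes r n fs d \<longleftrightarrow>
     (\<forall>g :: nat \<Rightarrow> 'a mpoly.
        (\<forall>l<length fs. hom_of r n (vsub d (pdeg r n (fs ! l))) (g l)) \<and>
        (\<Sum>l<length fs. g l * fs ! l) = 0
        \<longrightarrow> (\<exists>h :: nat \<Rightarrow> nat \<Rightarrow> 'a mpoly.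
               (\<forall>i j. h i j \<in> polys r n) \<and>
               (\<forall>l<length fs. g l = (\<Sum>i<l. h i l * fs ! i)
                                    - (\<Sum>j\<in>{l<..<length fs}. h l j * fs ! j))))"

end

theory Submission
  imports Defs "HOL-Library.FuncSet"
begin



lemma length_mdeg[simp]: "length (mdeg r n m) = r"
  by (simp add: mdeg_def)

lemma nth_mdeg: "t < r \<Longrightarrow> mdeg r n m ! t = int (\<Sum>j\<le>n t. Poly_Mapping.lookup m (t, j))"
  by (simp add: mdeg_def)

lemma length_vsub[simp]: "length (vsub d e) = min (length d) (length e)"
  by (simp add: vsub_def)

lemma nth_vsub: "t < length d \<Longrightarrow> t < length e \<Longrightarrow> vsub d e ! t = d ! t - e ! t"
  by (simp add: vsub_def)

lemma nth_mdeg_add: "t < r \<Longrightarrow> mdeg r n (a + b) ! t = mdeg r n a ! t + mdeg r n b ! t"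
  by (simp add: nth_mdeg lookup_add sum.distrib)

lemma deg_shift1:
  assumes "length e = r" "mdeg r n g = vsub e (mdeg r n m)"
  shows "mdeg r n (g + m) = e"
proof (rule nth_equalityI)
  show "length (mdeg r n (g + m)) = length e" using assms by simp
  fix t assume "t < length (mdeg r n (g + m))"
  hence t: "t < r" by simp
  have "mdeg r n g ! t = e ! t - mdeg r n m ! t"
    using assms t by (simp add: nth_vsub)
  thus "mdeg r n (g + m) ! t = e ! t" using t by (simp add: nth_mdeg_add)
qed

lemma deg_shift2:
  assumes "length e = r" "mdeg r n (g + m) = e"
  shows "mdeg r n g = vsub e (mdeg r n m)"
proof (rule nth_equalityI)
  show "length (mdeg r n g) = length (vsub e (mdeg r n m))" using assms by simp
  fix t assume "t < length (mdeg r n g)"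
  hence t: "t < r" by simp
  have "mdeg r n g ! t + mdeg r n m ! t = e ! t" using assms t nth_mdeg_add[of t r n g m] by simp
  thus "mdeg r n g ! t = vsub e (mdeg r n m) ! t" using t assms nth_vsub[of t e "mdeg r n m"] by simp
qed

lemma deg_shift3:
  assumes "mdeg r n g = vsub (vsub d (mdeg r n m)) b" "length b = r"
  shows "mdeg r n (g + m) = vsub d b"
proof (rule nth_equalityI)
  have "length (mdeg r n g) = r" by simp
  hence ld: "r \<le> length d" using assms(1) by (simp add: min_def split: if_splits)
  show "length (mdeg r n (g + m)) = length (vsub d b)" using assms(2) ld by simp
  fix t assume "t < length (mdeg r n (g + m))"
  hence t: "t < r" by simp
  have tl: "t < length d" "t < length (vsub d (mdeg r n m))" using t ld by auto
  have 1: "mdeg r n g ! t = vsub (vsub d (mdeg r n m)) b ! t" using assms(1) by (rule arg_cong)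
  have 2: "vsub (vsub d (mdeg r n m)) b ! t = vsub d (mdeg r n m) ! t - b ! t"
    using tl(2) t assms(2) by (intro nth_vsub) auto
  have 3: "vsub d (mdeg r n m) ! t = d ! t - mdeg r n m ! t"
    using tl(1) t by (intro nth_vsub) auto
  have 4: "vsub d b ! t = d ! t - b ! t" using tl(1) t assms(2) by (intro nth_vsub) auto
  have 5: "mdeg r n (g + m) ! t = mdeg r n g ! t + mdeg r n m ! t" using t by (rule nth_mdeg_add)
  show "mdeg r n (g + m) ! t = vsub d b ! t" using 1 2 3 4 5 by linarith
qed

lemma mons_add: "a \<in> mons r n \<Longrightarrow> b \<in> mons r n \<Longrightarrow> a + b \<in> mons r n"
  unfolding mons_def mem_Collect_eq using keys_add[of a b] by blast

lemma hom_iff: "hom_of r n e g \<longleftrightarrow> Poly_Mapping.keys g \<subseteq> mons_deg r n e"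
  unfolding hom_of_def polys_def mons_deg_def by auto

lemma keys_mono_mult: "Poly_Mapping.keys (Poly_Mapping.single g a * q) \<subseteq> (\<lambda>m. g + m) ` Poly_Mapping.keys q"
proof
  fix x assume "x \<in> Poly_Mapping.keys (Poly_Mapping.single g a * q)"
  then obtain u v where uv: "x = u + v" "u \<in> Poly_Mapping.keys (Poly_Mapping.single g a)" "v \<in> Poly_Mapping.keys q"
    using keys_mult by blast
  have "u = g" using uv(2) by (cases "a = 0") auto
  thus "x \<in> (\<lambda>m. g + m) ` Poly_Mapping.keys q" using uv by blast
qed

lemma keys_smult: "Poly_Mapping.keys (Poly_Mapping.single 0 a * q) \<subseteq> Poly_Mapping.keys q"
  using keys_mono_mult[of 0 a q] by simp

lemma poly_expand: "(p :: 'b::comm_ring_1 mpoly) = (\<Sum>m\<in>Poly_Mapping.keys p. Poly_Mapping.single 0 (Poly_Mapping.lookup p m) * Poly_Mapping.single m 1)"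
  by (rule poly_mapping_eqI) (auto simp: lookup_sum mult_single lookup_single when_def in_keys_iff sum.delta' )

lemma pdeg_hom:
  assumes "f \<noteq> 0" "multihomogeneous r n f"
  shows "hom_of r n (pdeg r n f) f" "length (pdeg r n f) = r"
proof -
  obtain e where e: "hom_of r n e f" using assms unfolding multihomogeneous_def by auto
  have "\<exists>m. m \<in> Poly_Mapping.keys f" using assms(1) by (metis ex_in_conv keys_eq_empty)
  hence "(SOME m. m \<in> Poly_Mapping.keys f) \<in> Poly_Mapping.keys f" by (rule someI_ex)
  hence "pdeg r n f = e" using e unfolding pdeg_def hom_of_def by auto
  thus "hom_of r n (pdeg r n f) f" "length (pdeg r n f) = r" using e by (auto simp: pdeg_def)
qed




lemma lc_zero: "lin_comb row I 0"
  unfolding lin_comb_def by (rule exI[of _ "{}"]) simp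

lemma lc_row: "x \<in> I \<Longrightarrow> lin_comb row I (row x)"
  unfolding lin_comb_def
  by (rule exI[of _ "{x}"], rule exI[of _ "\<lambda>_. 1"]) simp

lemma lc_add:
  assumes "lin_comb row I p" "lin_comb row I q"
  shows "lin_comb row I (p + q)"
proof -
  obtain A c where A: "finite A" "A \<subseteq> I" "p = (\<Sum>x\<in>A. Poly_Mapping.single 0 (c x) * row x)"
    using assms(1) unfolding lin_comb_def by blast
  obtain B c' where B: "finite B" "B \<subseteq> I" "q = (\<Sum>x\<in>B. Poly_Mapping.single 0 (c' x) * row x)"
    using assms(2) unfolding lin_comb_def by blast
  define e where "e x = (if x \<in> A then c x else 0) + (if x \<in> B then c' x else 0)" for x
  have "(\<Sum>x\<in>A \<union> B. Poly_Mapping.single 0 (e x) * row x)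
      = (\<Sum>x\<in>A \<union> B. Poly_Mapping.single 0 (if x \<in> A then c x else 0) * row x)
      + (\<Sum>x\<in>A \<union> B. Poly_Mapping.single 0 (if x \<in> B then c' x else 0) * row x)"
    unfolding e_def single_add distrib_right sum.distrib ..
  also have "(\<Sum>x\<in>A \<union> B. Poly_Mapping.single 0 (if x \<in> A then c x else 0) * row x) = p"
    unfolding A(3) using A(1) B(1)
    by (intro sum.mono_neutral_cong_right) auto
  also have "(\<Sum>x\<in>A \<union> B. Poly_Mapping.single 0 (if x \<in> B then c' x else 0) * row x) = q"
    unfolding B(3) using A(1) B(1)
    by (intro sum.mono_neutral_cong_right) auto
  finally show ?thesis unfolding lin_comb_def using A B by (intro exI[of _ "A \<union> B"] exI[of _ e]) auto
qed

lemma lc_smult: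
  assumes "lin_comb row I p"
  shows "lin_comb row I (Poly_Mapping.single 0 a * p)"
proof -
  obtain A c where A: "finite A" "A \<subseteq> I" "p = (\<Sum>x\<in>A. Poly_Mapping.single 0 (c x) * row x)"
    using assms(1) unfolding lin_comb_def by blast
  have "Poly_Mapping.single 0 a * p = (\<Sum>x\<in>A. Poly_Mapping.single 0 (a * c x) * row x)"
    unfolding A(3) sum_distrib_left
  proof (rule sum.cong[OF refl])
    fix x
    show "Poly_Mapping.single 0 a * (Poly_Mapping.single 0 (c x) * row x) = Poly_Mapping.single 0 (a * c x) * row x"
      by (simp only: mult.assoc[symmetric] mult_single add_0)
  qed
  thus ?thesis unfolding lin_comb_def using A by (intro exI[of _ A] exI[of _ "\<lambda>x. a * c x"]) simp
qed

lemma lc_neg: "lin_comb row I p \<Longrightarrow> lin_comb row I (- p)"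
proof -
  assume "lin_comb row I p"
  from lc_smult[OF this, of "-1"] show ?thesis
    by (simp only: single_uminus single_one mult_minus_left mult_1_left)
qed

lemma lc_diff: "lin_comb row I p \<Longrightarrow> lin_comb row I q \<Longrightarrow> lin_comb row I (p - q)"
  using lc_add[of row I p "- q"] lc_neg[of row I q] by simp

lemma lc_sum: "(\<And>s. s \<in> S \<Longrightarrow> lin_comb row I (f s)) \<Longrightarrow> lin_comb row I (\<Sum>s\<in>S. f s)"
proof (induction S rule: infinite_finite_induct)
  case (infinite A) thus ?case by (simp add: lc_zero)
next
  case empty thus ?case by (simp add: lc_zero)
next
  case (insert x F)
  have "lin_comb row I (f x + (\<Sum>s\<in>F. f s))"
    by (rule lc_add) (use insert in auto)
  thus ?case using insert(1,2) by simp
qed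

lemma lc_mono: "lin_comb row I p \<Longrightarrow> I \<subseteq> J \<Longrightarrow> lin_comb row J p"
proof -
  assume "lin_comb row I p" "I \<subseteq> J"
  then obtain A c where A: "finite A" "A \<subseteq> I" "p = (\<Sum>x\<in>A. Poly_Mapping.single 0 (c x) * row x)"
    unfolding lin_comb_def by blast
  show ?thesis unfolding lin_comb_def
    by (rule exI[of _ A], rule exI[of _ c]) (use A \<open>I \<subseteq> J\<close> in auto)
qed

lemma M3H_Suc_iff: "x \<in> M3H r n lt fs (Suc j) d \<longleftrightarrow> x \<in> M3H r n lt fs j d \<or>
   (fst x = j \<and> snd x \<in> mons_deg r n (vsub d (pdeg r n (fs ! j))) \<and>
    snd x \<notin> {lm lt p | p. p \<noteq> 0 \<and> lin_comb (mrow fs) (M3H r n lt fs j (vsub d (pdeg r n (fs ! j)))) p})"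
  by (cases x) (simp add: Let_def)

lemma M3H_mem: "x \<in> M3H r n lt fs j d \<Longrightarrow> fst x < j \<and> snd x \<in> mons_deg r n (vsub d (pdeg r n (fs ! fst x)))"
proof (induction j arbitrary: d)
  case 0 thus ?case by simp
next
  case (Suc j)
  have "x \<in> M3H r n lt fs j d \<or> (fst x = j \<and> snd x \<in> mons_deg r n (vsub d (pdeg r n (fs ! j))))"
    using Suc.prems unfolding M3H_Suc_iff by blast
  thus ?case
  proof
    assume "x \<in> M3H r n lt fs j d"
    from Suc.IH[OF this] show ?case by simp
  qed simp
qed

lemma M3H_mono: "M3H r n lt fs j d \<subseteq> M3H r n lt fs (Suc j) d"
  using M3H_Suc_iff by blast




lemma mo_irr: "monomial_order r n lt \<Longrightarrow> a \<in> mons r n \<Longrightarrow> \<not> lt a a"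
  unfolding monomial_order_def by (elim conjE) (erule bspec)
lemma mo_trans: "monomial_order r n lt \<Longrightarrow> a \<in> mons r n \<Longrightarrow> b \<in> mons r n \<Longrightarrow> c \<in> mons r n \<Longrightarrow> lt a b \<Longrightarrow> lt b c \<Longrightarrow> lt a c"
  unfolding monomial_order_def by (elim conjE) (meson)
lemma mo_total: "monomial_order r n lt \<Longrightarrow> a \<in> mons r n \<Longrightarrow> b \<in> mons r n \<Longrightarrow> a = b \<or> lt a b \<or> lt b a"
  unfolding monomial_order_def by (elim conjE) (meson)

lemma ex_max:
  assumes mo: "monomial_order r n lt" and "finite S" "S \<noteq> {}" "S \<subseteq> mons r n"
  shows "\<exists>m\<in>S. \<forall>m'\<in>S. m' \<noteq> m \<longrightarrow> lt m' m"
  using assms(2,3,4)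
proof (induction S rule: finite_ne_induct)
  case (singleton x) thus ?case by simp
next
  case (insert x F)
  obtain m where m: "m \<in> F" "\<forall>m'\<in>F. m' \<noteq> m \<longrightarrow> lt m' m" using insert by auto
  have xm: "x \<in> mons r n" "m \<in> mons r n" "F \<subseteq> mons r n" using insert m by auto
  have tot: "x = m \<or> lt x m \<or> lt m x" using mo_total[OF mo xm(1,2)] .
  note tr = mo_trans[OF mo]
  show ?case
  proof (cases "lt m x")
    case True
    have "\<forall>m'\<in>insert x F. m' \<noteq> x \<longrightarrow> lt m' x"
    proof (intro ballI impI)
      fix m' assume "m' \<in> insert x F" "m' \<noteq> x"
      hence "m' \<in> F" by simp
      show "lt m' x"
      proof (cases "m' = m")
        case True thus ?thesis using \<open>lt m x\<close> by simp
      next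
        case False thus ?thesis using m \<open>m' \<in> F\<close> xm tr[of m' m x] \<open>lt m x\<close> by blast
      qed
    qed
    thus ?thesis by blast
  next
    case False
    have "x \<noteq> m" using insert m by auto
    hence "lt x m" using tot False by auto
    thus ?thesis using m by auto
  qed
qed

lemma lm_prop:
  assumes mo: "monomial_order r n lt" and "Poly_Mapping.keys p \<subseteq> mons r n" "p \<noteq> 0"
  shows "lm lt p \<in> Poly_Mapping.keys p \<and> (\<forall>m'\<in>Poly_Mapping.keys p. m' \<noteq> lm lt p \<longrightarrow> lt m' (lm lt p))"
proof -
  have ne: "Poly_Mapping.keys p \<noteq> {}" using assms(3) by simp
  obtain m where m: "m \<in> Poly_Mapping.keys p" "\<forall>m'\<in>Poly_Mapping.keys p. m' \<noteq> m \<longrightarrow> lt m' m"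
    using ex_max[OF mo finite_keys ne assms(2)] by blast
  note irr = mo_irr[OF mo]
  note tr = mo_trans[OF mo]
  have uniq: "m2 = m" if "m2 \<in> Poly_Mapping.keys p" "\<forall>m'\<in>Poly_Mapping.keys p. m' \<noteq> m2 \<longrightarrow> lt m' m2" for m2
  proof (rule ccontr)
    assume "m2 \<noteq> m"
    hence "lt m2 m" "lt m m2" using that m by auto
    moreover have "m \<in> mons r n" "m2 \<in> mons r n" using m that assms(2) by auto
    ultimately show False using tr[of m m2 m] irr[of m] by blast
  qed
  have "lm lt p = m" unfolding lm_def
    by (rule the_equality) (use m uniq in blast)+
  thus ?thesis using m by simp
qed

lemma vars_eq: "vars r n = Sigma {..<r} (\<lambda>i. {..n i})"
  unfolding vars_def by auto

lemma finite_mons_deg: "finite (mons_deg r n e)"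
proof -
  let ?V = "vars r n"
  let ?f = "\<lambda>m. restrict (Poly_Mapping.lookup m) ?V"
  have fV: "finite ?V" unfolding vars_eq by auto
  have inj: "inj_on ?f (mons_deg r n e)"
  proof (rule inj_onI)
    fix a b assume ab: "a \<in> mons_deg r n e" "b \<in> mons_deg r n e" "?f a = ?f b"
    show "a = b"
    proof (rule poly_mapping_eqI)
      fix k
      show "Poly_Mapping.lookup a k = Poly_Mapping.lookup b k"
      proof (cases "k \<in> ?V")
        case True thus ?thesis using ab(3) by (metis restrict_apply')
      next
        case False
        hence "k \<notin> Poly_Mapping.keys a" "k \<notin> Poly_Mapping.keys b"
          using ab(1,2) unfolding mons_deg_def mons_def by auto
        thus ?thesis by (simp add: in_keys_iff)
      qed
    qed
  qed
  have img: "?f ` mons_deg r n e \<subseteq> PiE ?V (\<lambda>k. {..nat (e ! fst k)})"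
  proof
    fix g assume "g \<in> ?f ` mons_deg r n e"
    then obtain m where m: "m \<in> mons_deg r n e" "g = ?f m" by blast
    show "g \<in> PiE ?V (\<lambda>k. {..nat (e ! fst k)})"
      unfolding m(2)
    proof (rule restrict_PiE_iff[THEN iffD2], intro ballI)
      fix k assume k: "k \<in> ?V"
      obtain i j where ij: "k = (i, j)" "i < r" "j \<le> n i" using k unfolding vars_def by auto
      have "Poly_Mapping.lookup m (i, j) \<le> (\<Sum>j'\<le>n i. Poly_Mapping.lookup m (i, j'))"
        by (rule member_le_sum) (use ij in auto)
      moreover have "e ! i = int (\<Sum>j'\<le>n i. Poly_Mapping.lookup m (i, j'))"
        using m(1) ij(2) unfolding mons_deg_def by (auto simp: nth_mdeg)
      hence "nat (e ! i) = (\<Sum>j'\<le>n i. Poly_Mapping.lookup m (i, j'))" by (metis nat_int)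
      ultimately show "Poly_Mapping.lookup m k \<in> {..nat (e ! fst k)}" using ij by simp
    qed
  qed
  have "finite (PiE ?V (\<lambda>k. {..nat (e ! fst k)}))" by (rule finite_PiE) (use fV in auto)
  hence "finite (?f ` mons_deg r n e)" using img finite_subset by blast
  thus ?thesis using finite_image_iff inj by blast
qed




lemma fs_hom:
  assumes ok: "\<forall>f\<in>set fs. f \<noteq> 0 \<and> multihomogeneous r n f" and i: "i < length fs"
  shows "Poly_Mapping.keys (fs ! i) \<subseteq> mons_deg r n (pdeg r n (fs ! i))" "length (pdeg r n (fs ! i)) = r"
proof -
  have "fs ! i \<in> set fs" using i by simp
  hence "fs ! i \<noteq> 0" "multihomogeneous r n (fs ! i)" using ok by auto
  from pdeg_hom[OF this] show "Poly_Mapping.keys (fs ! i) \<subseteq> mons_deg r n (pdeg r n (fs ! i))" "length (pdeg r n (fs ! i)) = r"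
    by (auto simp: hom_iff)
qed

lemma row_keys:
  assumes ok: "\<forall>f\<in>set fs. f \<noteq> 0 \<and> multihomogeneous r n f" and i: "i < length fs"
    and e: "length e = r" and g: "g \<in> mons_deg r n (vsub e (pdeg r n (fs ! i)))"
  shows "Poly_Mapping.keys (mrow fs (i, g)) \<subseteq> mons_deg r n e"
proof
  fix x assume "x \<in> Poly_Mapping.keys (mrow fs (i, g))"
  then obtain m where m: "x = g + m" "m \<in> Poly_Mapping.keys (fs ! i)"
    using keys_mono_mult[of g 1 "fs ! i"] unfolding mrow_def by auto
  have md: "m \<in> mons r n" "mdeg r n m = pdeg r n (fs ! i)" using fs_hom[OF ok i] m(2)
    unfolding mons_deg_def by auto
  have gd: "g \<in> mons r n" "mdeg r n g = vsub e (mdeg r n m)" using g md unfolding mons_deg_def by auto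
  have "mdeg r n (g + m) = e" by (rule deg_shift1[OF e gd(2)])
  thus "x \<in> mons_deg r n e" using mons_add[OF gd(1) md(1)] m(1) unfolding mons_deg_def by simp
qed

lemma lc_hom:
  assumes ok: "\<forall>f\<in>set fs. f \<noteq> 0 \<and> multihomogeneous r n f" and j: "j \<le> length fs"
    and e: "length e = r" and p: "lin_comb (mrow fs) (M3H r n lt fs j e) p"
  shows "Poly_Mapping.keys p \<subseteq> mons_deg r n e"
proof -
  obtain A c where A: "finite A" "A \<subseteq> M3H r n lt fs j e" "p = (\<Sum>x\<in>A. Poly_Mapping.single 0 (c x) * mrow fs x)"
    using p unfolding lin_comb_def by blast
  have "Poly_Mapping.keys p \<subseteq> (\<Union>x\<in>A. Poly_Mapping.keys (Poly_Mapping.single 0 (c x) * mrow fs x))"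
    unfolding A(3) by (rule keys_sum)
  also have "\<dots> \<subseteq> mons_deg r n e"
  proof (rule UN_least)
    fix x assume "x \<in> A"
    hence "x \<in> M3H r n lt fs j e" using A(2) by blast
    from M3H_mem[OF this] have x: "fst x < length fs" "snd x \<in> mons_deg r n (vsub e (pdeg r n (fs ! fst x)))"
      using j by auto
    have "Poly_Mapping.keys (Poly_Mapping.single 0 (c x) * mrow fs x) \<subseteq> Poly_Mapping.keys (mrow fs x)"
      by (rule keys_smult)
    also have "\<dots> \<subseteq> mons_deg r n e" using row_keys[OF ok x(1) e x(2)] by (cases x) simp
    finally show "Poly_Mapping.keys (Poly_Mapping.single 0 (c x) * mrow fs x) \<subseteq> mons_deg r n e" .
  qed
  finally show ?thesis .
qed




lemma mrow_mult_expand: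
  "mrow fs (i, g) * (f :: 'a::field mpoly) =
   (\<Sum>m\<in>Poly_Mapping.keys f. Poly_Mapping.single 0 (Poly_Mapping.lookup f m) * mrow fs (i, g + m))"
proof -
  have "mrow fs (i, g) * f = mrow fs (i, g) * (\<Sum>m\<in>Poly_Mapping.keys f. Poly_Mapping.single 0 (Poly_Mapping.lookup f m) * Poly_Mapping.single m 1)"
    by (subst poly_expand[of f]) (rule refl)
  also have "\<dots> = (\<Sum>m\<in>Poly_Mapping.keys f. mrow fs (i, g) * (Poly_Mapping.single 0 (Poly_Mapping.lookup f m) * Poly_Mapping.single m 1))"
    by (rule sum_distrib_left)
  also have "\<dots> = (\<Sum>m\<in>Poly_Mapping.keys f. Poly_Mapping.single 0 (Poly_Mapping.lookup f m) * mrow fs (i, g + m))"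
  proof (rule sum.cong[OF refl])
    fix m
    have s: "Poly_Mapping.single (g + m) (1::'a) = Poly_Mapping.single g 1 * Poly_Mapping.single m 1"
      by (simp add: mult_single)
    show "mrow fs (i, g) * (Poly_Mapping.single 0 (Poly_Mapping.lookup f m) * Poly_Mapping.single m 1) =
          Poly_Mapping.single 0 (Poly_Mapping.lookup f m) * mrow fs (i, g + m)"
      unfolding mrow_def fst_conv snd_conv s by (simp only: ac_simps)
  qed
  finally show ?thesis .
qed

lemma poly_mult_row_expand:
  "(p :: 'a::field mpoly) * fs ! k = (\<Sum>m\<in>Poly_Mapping.keys p. Poly_Mapping.single 0 (Poly_Mapping.lookup p m) * mrow fs (k, m))"
proof -
  have "p * fs ! k = (\<Sum>m\<in>Poly_Mapping.keys p. Poly_Mapping.single 0 (Poly_Mapping.lookup p m) * Poly_Mapping.single m 1) * fs ! k"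
    by (subst poly_expand[of p]) (rule refl)
  also have "\<dots> = (\<Sum>m\<in>Poly_Mapping.keys p. Poly_Mapping.single 0 (Poly_Mapping.lookup p m) * Poly_Mapping.single m 1 * fs ! k)"
    by (rule sum_distrib_right)
  also have "\<dots> = (\<Sum>m\<in>Poly_Mapping.keys p. Poly_Mapping.single 0 (Poly_Mapping.lookup p m) * mrow fs (k, m))"
    unfolding mrow_def fst_conv snd_conv by (simp only: mult.assoc)
  finally show ?thesis .
qed




lemma span_rows:
  fixes fs :: "'a::field mpoly list"
  assumes ok: "\<forall>f\<in>set fs. f \<noteq> 0 \<and> multihomogeneous r n f" and mo: "monomial_order r n lt"
  shows "j \<le> length fs \<Longrightarrow> i < j \<Longrightarrow> g \<in> mons_deg r n (vsub d (pdeg r n (fs ! i))) \<Longrightarrow>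
         lin_comb (mrow fs) (M3H r n lt fs j d) (mrow fs (i, g))"
proof (induction j arbitrary: d i g)
  case 0 thus ?case by simp
next
  case (Suc k)
  show ?case
  proof (cases "i < k")
    case True
    have "lin_comb (mrow fs) (M3H r n lt fs k d) (mrow fs (i, g))"
      using Suc.IH[where d=d and i=i and g=g] Suc.prems True by simp
    thus ?thesis by (rule lc_mono[OF _ M3H_mono])
  next
    case False
    hence ik: "i = k" using Suc.prems by simp
    have k: "k < length fs" using Suc.prems by simp
    define e where "e = vsub d (pdeg r n (fs ! k))"
    define S where "S = mons_deg r n e"
    define L where "L = {lm lt p | p. p \<noteq> 0 \<and> lin_comb (mrow fs) (M3H r n lt fs k e) p}"
    let ?I = "M3H r n lt fs (Suc k) d"
    have finS: "finite S" unfolding S_def by (rule finite_mons_deg)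
    have main: "\<forall>g. g \<in> S \<longrightarrow> card {x \<in> S. lt x g} = N \<longrightarrow> lin_comb (mrow fs) ?I (mrow fs (k, g))" for N
    proof (induction N rule: less_induct)
      case (less N)
      show ?case
      proof (intro allI impI)
        fix g assume gS: "g \<in> S" and cardN: "card {x \<in> S. lt x g} = N"
        show "lin_comb (mrow fs) ?I (mrow fs (k, g))"
        proof (cases "g \<in> L")
          case False
          have "(k, g) \<in> ?I" unfolding M3H_Suc_iff using gS False unfolding S_def L_def e_def by simp
          thus ?thesis by (rule lc_row)
        next
          case True
          then obtain p where p: "p \<noteq> 0" "lin_comb (mrow fs) (M3H r n lt fs k e) p" "lm lt p = g"
            unfolding L_def by blast
          have le: "length e = r" using gS unfolding S_def mons_deg_def by auto
          have keysp: "Poly_Mapping.keys p \<subseteq> S" unfolding S_def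
            by (rule lc_hom[OF ok _ le p(2)]) (use k in simp)
          have keysp': "Poly_Mapping.keys p \<subseteq> mons r n" using keysp unfolding S_def mons_deg_def by auto
          from lm_prop[OF mo keysp' p(1)] p(3)
          have gp: "g \<in> Poly_Mapping.keys p" and below: "\<forall>m'\<in>Poly_Mapping.keys p. m' \<noteq> g \<longrightarrow> lt m' g" by auto
          obtain A c where A: "finite A" "A \<subseteq> M3H r n lt fs k e" "p = (\<Sum>x\<in>A. Poly_Mapping.single 0 (c x) * mrow fs x)"
            using p(2) unfolding lin_comb_def by blast
          have P1: "lin_comb (mrow fs) (M3H r n lt fs k d) (p * fs ! k)"
          proof -
            have "p * fs ! k = (\<Sum>x\<in>A. Poly_Mapping.single 0 (c x) * (mrow fs x * fs ! k))"
              unfolding A(3) sum_distrib_right by (simp only: mult.assoc)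
            also have "lin_comb (mrow fs) (M3H r n lt fs k d) \<dots>"
            proof (rule lc_sum, rule lc_smult)
              fix x assume "x \<in> A"
              hence xm: "x \<in> M3H r n lt fs k e" using A(2) by blast
              from M3H_mem[OF xm] have x: "fst x < k" "snd x \<in> mons_deg r n (vsub e (pdeg r n (fs ! fst x)))"
                by auto
              have fx: "fst x < length fs" using x k by simp
              have "mrow fs x * fs ! k = (\<Sum>m\<in>Poly_Mapping.keys (fs ! k). Poly_Mapping.single 0 (Poly_Mapping.lookup (fs ! k) m) * mrow fs (fst x, snd x + m))"
                using mrow_mult_expand[of fs "fst x" "snd x" "fs ! k"] by (cases x) simp
              also have "lin_comb (mrow fs) (M3H r n lt fs k d) \<dots>"
              proof (rule lc_sum, rule lc_smult)
                fix m assume m: "m \<in> Poly_Mapping.keys (fs ! k)"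
                have md: "m \<in> mons r n" "mdeg r n m = pdeg r n (fs ! k)" using fs_hom[OF ok k] m
                  unfolding mons_deg_def by auto
                have sx: "snd x \<in> mons r n" "mdeg r n (snd x) = vsub (vsub d (mdeg r n m)) (pdeg r n (fs ! fst x))"
                  using x(2) md unfolding mons_deg_def e_def by auto
                have "mdeg r n (snd x + m) = vsub d (pdeg r n (fs ! fst x))"
                  by (rule deg_shift3[OF sx(2) fs_hom(2)[OF ok fx]])
                hence "snd x + m \<in> mons_deg r n (vsub d (pdeg r n (fs ! fst x)))"
                  using mons_add[OF sx(1) md(1)] unfolding mons_deg_def by simp
                thus "lin_comb (mrow fs) (M3H r n lt fs k d) (mrow fs (fst x, snd x + m))"
                  using Suc.IH[where i="fst x" and d=d and g="snd x + m"] Suc.prems x(1) by simp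
              qed
              finally show "lin_comb (mrow fs) (M3H r n lt fs k d) (mrow fs x * fs ! k)" .
            qed
            finally show ?thesis .
          qed
          have P1': "lin_comb (mrow fs) ?I (p * fs ! k)" using P1 by (rule lc_mono[OF _ M3H_mono])
          have P2: "lin_comb (mrow fs) ?I (\<Sum>m\<in>Poly_Mapping.keys p - {g}. Poly_Mapping.single 0 (Poly_Mapping.lookup p m) * mrow fs (k, m))"
          proof (rule lc_sum, rule lc_smult)
            fix m assume m: "m \<in> Poly_Mapping.keys p - {g}"
            have mS: "m \<in> S" using m keysp by auto
            have ltmg: "lt m g" using below m by auto
            have Smons: "S \<subseteq> mons r n" unfolding S_def mons_deg_def by auto
            have sub: "{x \<in> S. lt x m} \<subset> {x \<in> S. lt x g}"
            proof
              show "{x \<in> S. lt x m} \<subseteq> {x \<in> S. lt x g}"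
                using mo_trans[OF mo _ _ _ _ ltmg] Smons mS gS by blast
              show "{x \<in> S. lt x m} \<noteq> {x \<in> S. lt x g}"
                using mS ltmg mo_irr[OF mo, of m] Smons by blast
            qed
            have cm: "card {x \<in> S. lt x m} < N"
              using psubset_card_mono[OF _ sub] finS cardN by simp
            thus "lin_comb (mrow fs) ?I (mrow fs (k, m))" using less.IH[OF cm] mS by simp
          qed
          define cg where "cg = Poly_Mapping.lookup p g"
          have cg: "cg \<noteq> 0" using gp unfolding cg_def by (simp add: in_keys_iff)
          have "p * fs ! k = Poly_Mapping.single 0 cg * mrow fs (k, g) +
               (\<Sum>m\<in>Poly_Mapping.keys p - {g}. Poly_Mapping.single 0 (Poly_Mapping.lookup p m) * mrow fs (k, m))"
            unfolding poly_mult_row_expand cg_def using sum.remove[OF finite_keys gp] by simp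
          hence eq: "mrow fs (k, g) = Poly_Mapping.single 0 (inverse cg) * (p * fs ! k -
               (\<Sum>m\<in>Poly_Mapping.keys p - {g}. Poly_Mapping.single 0 (Poly_Mapping.lookup p m) * mrow fs (k, m)))"
            using cg by (simp add: mult_single right_diff_distrib flip: mult.assoc)
          show ?thesis unfolding eq by (intro lc_smult lc_diff P1' P2)
        qed
      qed
    qed
    have "g \<in> S" using Suc.prems ik unfolding S_def e_def by simp
    thus ?thesis using main[rule_format, OF _ refl] ik by simp
  qed
qed




definition prj :: "nat \<Rightarrow> (nat \<Rightarrow> nat) \<Rightarrow> int list \<Rightarrow> ('a::zero) mpoly \<Rightarrow> 'a mpoly" where
  "prj r n e q = Poly_Mapping.mapp (\<lambda>m v. if mdeg r n m = e then v else 0) q"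

lemma lookup_prj: "Poly_Mapping.lookup (prj r n e q) m = (if mdeg r n m = e then Poly_Mapping.lookup q m else 0)"
  unfolding prj_def lookup_mapp by (simp add: when_def in_keys_iff)

lemma prj_sum: "prj r n e (\<Sum>x\<in>X. q x) = (\<Sum>x\<in>X. prj r n e (q x :: 'a::comm_monoid_add mpoly))"
proof (rule poly_mapping_eqI)
  fix m
  show "Poly_Mapping.lookup (prj r n e (\<Sum>x\<in>X. q x)) m = Poly_Mapping.lookup (\<Sum>x\<in>X. prj r n e (q x)) m"
    by (cases "mdeg r n m = e") (simp_all add: lookup_prj lookup_sum)
qed

lemma prj_id: "Poly_Mapping.keys q \<subseteq> mons_deg r n e \<Longrightarrow> prj r n e q = q"
proof (rule poly_mapping_eqI)
  fix m assume "Poly_Mapping.keys q \<subseteq> mons_deg r n e"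
  thus "Poly_Mapping.lookup (prj r n e q) m = Poly_Mapping.lookup q m"
    unfolding lookup_prj mons_deg_def by (auto simp: in_keys_iff)
qed

lemma prj_zero: "\<forall>m\<in>Poly_Mapping.keys q. mdeg r n m \<noteq> e \<Longrightarrow> prj r n e q = 0"
proof (rule poly_mapping_eqI)
  fix m assume "\<forall>m\<in>Poly_Mapping.keys q. mdeg r n m \<noteq> e"
  thus "Poly_Mapping.lookup (prj r n e q) m = Poly_Mapping.lookup 0 m"
    unfolding lookup_prj by (auto simp: in_keys_iff)
qed

lemma ideal_span:
  fixes fs :: "'a::field mpoly list"
  assumes ok: "\<forall>f\<in>set fs. f \<noteq> 0 \<and> multihomogeneous r n f" and mo: "monomial_order r n lt"
    and j: "j \<le> length fs" and e: "length e = r" and pk: "Poly_Mapping.keys p \<subseteq> mons_deg r n e"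
    and h: "\<forall>i<j. h i \<in> polys r n" and peq: "p = (\<Sum>i<j. h i * fs ! i)"
  shows "lin_comb (mrow fs) (M3H r n lt fs j e) p"
proof -
  have "p = (\<Sum>i<j. \<Sum>g\<in>Poly_Mapping.keys (h i). Poly_Mapping.single 0 (Poly_Mapping.lookup (h i) g) * mrow fs (i, g))"
    unfolding peq
  proof (rule sum.cong[OF refl])
    fix i
    have "h i * fs ! i = (\<Sum>g\<in>Poly_Mapping.keys (h i). Poly_Mapping.single 0 (Poly_Mapping.lookup (h i) g) * Poly_Mapping.single g 1) * fs ! i"
      by (subst poly_expand[of "h i"]) (rule refl)
    also have "\<dots> = (\<Sum>g\<in>Poly_Mapping.keys (h i). Poly_Mapping.single 0 (Poly_Mapping.lookup (h i) g) * mrow fs (i, g))"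
      unfolding sum_distrib_right mrow_def fst_conv snd_conv by (simp only: mult.assoc)
    finally show "h i * fs ! i = \<dots>" .
  qed
  hence "p = prj r n e (\<Sum>i<j. \<Sum>g\<in>Poly_Mapping.keys (h i). Poly_Mapping.single 0 (Poly_Mapping.lookup (h i) g) * mrow fs (i, g))"
    using prj_id[OF pk] by simp
  also have "\<dots> = (\<Sum>i<j. \<Sum>g\<in>Poly_Mapping.keys (h i). prj r n e (Poly_Mapping.single 0 (Poly_Mapping.lookup (h i) g) * mrow fs (i, g)))"
    by (simp only: prj_sum)
  finally have peq2: "p = \<dots>" .
  show ?thesis unfolding peq2
  proof (rule lc_sum, rule lc_sum)
    fix i g assume i: "i \<in> {..<j}" and g: "g \<in> Poly_Mapping.keys (h i)"
    have il: "i < length fs" using i j by simp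
    have gm: "g \<in> mons r n" using h i g unfolding polys_def by auto
    let ?t = "Poly_Mapping.single 0 (Poly_Mapping.lookup (h i) g) * mrow fs (i, g)"
    have kt: "Poly_Mapping.keys ?t \<subseteq> Poly_Mapping.keys (mrow fs (i, g))" by (rule keys_smult)
    show "lin_comb (mrow fs) (M3H r n lt fs j e) (prj r n e ?t)"
    proof (cases "mdeg r n g = vsub e (pdeg r n (fs ! i))")
      case True
      hence gd: "g \<in> mons_deg r n (vsub e (pdeg r n (fs ! i)))" using gm unfolding mons_deg_def by simp
      have "Poly_Mapping.keys ?t \<subseteq> mons_deg r n e" using kt row_keys[OF ok il e gd] by blast
      hence "prj r n e ?t = ?t" by (rule prj_id)
      moreover have "lin_comb (mrow fs) (M3H r n lt fs j e) ?t"
        by (rule lc_smult, rule span_rows[OF ok mo j]) (use i gd in auto)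
      ultimately show ?thesis by simp
    next
      case False
      have "\<forall>x\<in>Poly_Mapping.keys ?t. mdeg r n x \<noteq> e"
      proof
        fix x assume "x \<in> Poly_Mapping.keys ?t"
        hence "x \<in> Poly_Mapping.keys (mrow fs (i, g))" using kt by blast
        then obtain m where m: "x = g + m" "m \<in> Poly_Mapping.keys (fs ! i)"
          using keys_mono_mult[of g 1 "fs ! i"] unfolding mrow_def by auto
        have md: "mdeg r n m = pdeg r n (fs ! i)" using fs_hom[OF ok il] m(2)
          unfolding mons_deg_def by auto
        show "mdeg r n x \<noteq> e"
        proof
          assume "mdeg r n x = e"
          hence "mdeg r n g = vsub e (mdeg r n m)" using deg_shift2[OF e] m(1) by blast
          thus False using False md by simp
        qed
      qed
      hence "prj r n e ?t = 0" by (rule prj_zero)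
      thus ?thesis by (simp add: lc_zero)
    qed
  qed
qed




theorem mainTheorem17:
  fixes r :: nat and n :: "nat \<Rightarrow> nat"
    and fs :: "('a::field_char_0) mpoly list"
    and lt :: "mon \<Rightarrow> mon \<Rightarrow> bool"
    and d :: "int list"
  assumes "fs \<noteq> []"
    and "\<forall>f\<in>set fs. f \<noteq> 0 \<and> multihomogeneous r n f"
    and "monomial_order r n lt"
    and "length d = r"
    and "H1_vanishes r n fs d"
  shows "\<forall>\<beta>. (length fs - 1, \<beta>) \<in> M3H r n lt fs (length fs) d \<longrightarrow>
           \<not> lin_comb (mrow fs) (M3H r n lt fs (length fs) d - {(length fs - 1, \<beta>)})
                (mrow fs (length fs - 1, \<beta>))"
proof (intro allI impI notI)
  note ok = assms(2) and mo = assms(3)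
  fix \<beta>
  obtain k where K: "length fs = Suc k" using assms(1) by (cases fs) auto
  have k: "k < length fs" using K by simp
  define e where "e = vsub d (pdeg r n (fs ! k))"
  define L where "L = {lm lt p | p. p \<noteq> 0 \<and> lin_comb (mrow fs) (M3H r n lt fs k e) p}"
  let ?I = "M3H r n lt fs (Suc k) d"
  assume mem0: "(length fs - 1, \<beta>) \<in> M3H r n lt fs (length fs) d"
    and lc0: "lin_comb (mrow fs) (M3H r n lt fs (length fs) d - {(length fs - 1, \<beta>)}) (mrow fs (length fs - 1, \<beta>))"
  have mem: "(k, \<beta>) \<in> ?I" using mem0 K by simp
  have lc: "lin_comb (mrow fs) (?I - {(k, \<beta>)}) (mrow fs (k, \<beta>))" using lc0 K by simp
  have notk: "(k, b) \<notin> M3H r n lt fs k d" for b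
  proof
    assume "(k, b) \<in> M3H r n lt fs k d"
    from M3H_mem[OF this] show False by simp
  qed
  have newrow: "(k, b) \<in> ?I \<longleftrightarrow> b \<in> mons_deg r n e \<and> b \<notin> L" for b
    unfolding M3H_Suc_iff L_def e_def using notk[of b] by simp
  have \<beta>: "\<beta> \<in> mons_deg r n e" "\<beta> \<notin> L" using newrow mem by auto
  have le: "length e = r" using \<beta>(1) unfolding mons_deg_def by auto
  obtain A c where A: "finite A" "A \<subseteq> ?I - {(k, \<beta>)}"
    "mrow fs (k, \<beta>) = (\<Sum>x\<in>A. Poly_Mapping.single 0 (c x) * mrow fs x)"
    using lc unfolding lin_comb_def by blast
  have Amem: "fst x < Suc k \<and> snd x \<in> mons_deg r n (vsub d (pdeg r n (fs ! fst x)))" if "x \<in> A" for x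
    using M3H_mem[of x] A(2) that by blast
  define G where "G x = Poly_Mapping.single (snd x) (c x)" for x :: "nat \<times> mon"
  have GA: "Poly_Mapping.single 0 (c x) * mrow fs x = G x * fs ! fst x" for x
    unfolding G_def mrow_def by (simp add: mult_single flip: mult.assoc)
  define g where "g l = (if l = k then Poly_Mapping.single \<beta> (1::'a) else 0) - (\<Sum>x\<in>{x \<in> A. fst x = l}. G x)" for l
  have keysG: "Poly_Mapping.keys (G x) \<subseteq> {snd x}" for x unfolding G_def by simp
  have hom: "hom_of r n (vsub d (pdeg r n (fs ! l))) (g l)" if "l < length fs" for l
    unfolding hom_iff
  proof -
    have "Poly_Mapping.keys (g l) \<subseteq> Poly_Mapping.keys (if l = k then Poly_Mapping.single \<beta> (1::'a) else 0) \<union>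
            Poly_Mapping.keys (\<Sum>x\<in>{x \<in> A. fst x = l}. G x)"
      unfolding g_def by (rule keys_diff)
    also have "\<dots> \<subseteq> mons_deg r n (vsub d (pdeg r n (fs ! l)))"
    proof (rule Un_least)
      show "Poly_Mapping.keys (if l = k then Poly_Mapping.single \<beta> (1::'a) else 0) \<subseteq> mons_deg r n (vsub d (pdeg r n (fs ! l)))"
        using \<beta>(1) unfolding e_def by auto
      have "Poly_Mapping.keys (\<Sum>x\<in>{x \<in> A. fst x = l}. G x) \<subseteq> (\<Union>x\<in>{x \<in> A. fst x = l}. Poly_Mapping.keys (G x))"
        by (rule keys_sum)
      also have "\<dots> \<subseteq> mons_deg r n (vsub d (pdeg r n (fs ! l)))"
        using keysG Amem by fastforce
      finally show "Poly_Mapping.keys (\<Sum>x\<in>{x \<in> A. fst x = l}. G x) \<subseteq> mons_deg r n (vsub d (pdeg r n (fs ! l)))" .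
    qed
    finally show "Poly_Mapping.keys (g l) \<subseteq> mons_deg r n (vsub d (pdeg r n (fs ! l)))" .
  qed
  have syz: "(\<Sum>l<length fs. g l * fs ! l) = 0"
  proof -
    have s1: "(\<Sum>l<Suc k. (if l = k then Poly_Mapping.single \<beta> (1::'a) else 0) * fs ! l) = mrow fs (k, \<beta>)"
      unfolding mrow_def by (simp add: if_distrib[of "\<lambda>x. x * _"] cong: if_cong)
    have "(\<Sum>l<Suc k. (\<Sum>x\<in>{x \<in> A. fst x = l}. G x) * fs ! l)
        = (\<Sum>l<Suc k. \<Sum>x\<in>{x \<in> A. fst x = l}. G x * fs ! fst x)"
      by (rule sum.cong[OF refl]) (simp add: sum_distrib_right)
    also have "\<dots> = (\<Sum>x\<in>A. G x * fs ! fst x)"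
      by (rule sum.group) (use A(1) Amem in auto)
    also have "\<dots> = mrow fs (k, \<beta>)" unfolding A(3) GA ..
    finally have s2: "(\<Sum>l<Suc k. (\<Sum>x\<in>{x \<in> A. fst x = l}. G x) * fs ! l) = mrow fs (k, \<beta>)" .
    have "(\<Sum>l<length fs. g l * fs ! l) = (\<Sum>l<Suc k. (if l = k then Poly_Mapping.single \<beta> (1::'a) else 0) * fs ! l)
          - (\<Sum>l<Suc k. (\<Sum>x\<in>{x \<in> A. fst x = l}. G x) * fs ! l)"
      unfolding K g_def left_diff_distrib sum_subtractf ..
    thus ?thesis using s1 s2 by simp
  qed
  obtain h where h: "\<forall>i j. h i j \<in> polys r n"
    "\<forall>l<length fs. g l = (\<Sum>i<l. h i l * fs ! i) - (\<Sum>j\<in>{l<..<length fs}. h l j * fs ! j)"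
    using assms(5) hom syz unfolding H1_vanishes_def by blast
  have emp: "{k<..<Suc k} = ({}::nat set)" by auto
  have gk: "g k = (\<Sum>i<k. h i k * fs ! i)" using h(2) k K emp by simp
  have gkeys: "Poly_Mapping.keys (g k) \<subseteq> mons_deg r n e" using hom[OF k] unfolding hom_iff e_def .
  have span: "lin_comb (mrow fs) (M3H r n lt fs k e) (g k)"
    by (rule ideal_span[OF ok mo _ le gkeys _ gk]) (use h(1) K in auto)
  have lookG: "Poly_Mapping.lookup (G x) \<beta> = 0" if "x \<in> A" "fst x = k" for x
  proof -
    have "snd x \<noteq> \<beta>" using that A(2) by (cases x) auto
    thus ?thesis unfolding G_def by (simp add: lookup_single)
  qed
  have "Poly_Mapping.lookup (g k) \<beta> = 1"
    unfolding g_def using lookG by (simp add: lookup_minus lookup_sum)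
  hence \<beta>g: "\<beta> \<in> Poly_Mapping.keys (g k)" by (simp add: in_keys_iff)
  hence gk0: "g k \<noteq> 0" by auto
  have "Poly_Mapping.keys (g k) \<subseteq> mons r n" using gkeys unfolding mons_deg_def by auto
  from lm_prop[OF mo this gk0] have lmk: "lm lt (g k) \<in> Poly_Mapping.keys (g k)" by blast
  have lmL: "lm lt (g k) \<in> L" unfolding L_def using gk0 span by blast
  have "Poly_Mapping.keys (g k) \<subseteq> {\<beta>} \<union> (\<Union>x\<in>{x \<in> A. fst x = k}. {snd x})"
  proof -
    have "Poly_Mapping.keys (g k) \<subseteq> Poly_Mapping.keys (Poly_Mapping.single \<beta> (1::'a)) \<union>
            Poly_Mapping.keys (\<Sum>x\<in>{x \<in> A. fst x = k}. G x)"
      unfolding g_def using keys_diff[of "Poly_Mapping.single \<beta> (1::'a)" "\<Sum>x\<in>{x \<in> A. fst x = k}. G x"] by simp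
    also have "\<dots> \<subseteq> {\<beta>} \<union> (\<Union>x\<in>{x \<in> A. fst x = k}. Poly_Mapping.keys (G x))"
      using keys_sum[of G "{x \<in> A. fst x = k}"] by auto
    also have "\<dots> \<subseteq> {\<beta>} \<union> (\<Union>x\<in>{x \<in> A. fst x = k}. {snd x})" using keysG by blast
    finally show ?thesis .
  qed
  with lmk consider "lm lt (g k) = \<beta>" | x where "x \<in> A" "fst x = k" "lm lt (g k) = snd x" by blast
  thus False
  proof cases
    case 1 thus False using lmL \<beta>(2) by simp
  next
    case 2
    have "(k, snd x) \<in> ?I" using 2 A(2) by (cases x) auto
    hence "snd x \<notin> L" using newrow by blast
    thus False using lmL 2 by simp
  qed
qed


end
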